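(* Assume [LJ1]–[LJ4]. Then $\frac12J_1(\delta_1)\le B_{IF}(m)\le\frac12J_1(\gamma)$ for every $m\in\mathbb N\cup\{+\infty\}$, and $B_b(\theta)\le\frac12J_1(\theta)$ for every $\theta>0$.
   Context: Potentials: $J_1,J_2:\mathbb R\to(-\infty,+\infty]$; $J_{CB}:=J_1+J_2$; $J_0(z):=J_2(z)+\frac12\inf\{J_1(z_1)+J_1(z_2):z_1+z_2=2z\}$; $J_0^{**}$ is the convex lower semicontinuous envelope of $J_0$. Hypotheses: [LJ1] $\{z:J_0(z)=J_0^{**}(z)\}\cap\{z:J_0\text{ is affine in a neighbourhood of }z\}=\emptyset$. [LJ2] for every $z$ with $J_0(z)=J_0^{**}(z)$, the set $\{(z_1,z_2):z_1+z_2=2z,\ J_0(z)=J_2(z)+\frac12(J_1(z_1)+J_1(z_2))\}$ has exactly one element. [LJ3] $J_1,J_2$ are $C^{1,\alpha}$ on their domains for some $0<\alpha\le1$, $J_0$ is $C^1$ on its domain, $\operatorname{dom}J_1=\operatorname{dom}J_2\supset(0,+\infty)$, $\lim_{z\to+\infty}J_j(z)=0$ ($j=1,2$) and $\lim_{z\to+\infty}J_0(z)=:J_0(+\infty)\in\mathbb R$. [LJ4] there is a convex $\Psi:\mathbb R\to[0,+\infty]$ with $\lim_{z\to-\infty}\Psi(z)/|z|=+\infty$ and constants $c_1,c_2>0$ with $c_1(\Psi(z)-1)\le J_j(z)\le c_2\max\{\Psi(z),|z|\}$ for all $z\in\mathbb R$, $j=1,2$; there are $\delta_1,\delta_2,\gamma>0$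 with $\{\delta_j\}=\operatorname{argmin}J_j$ and $\{\gamma\}=\operatorname{argmin}J_0$; $J_j$ is strictly convex on $(-\infty,\delta_j)\cap\operatorname{dom}J_j$; $J_0(\gamma)<J_0(+\infty)$; and $J_0(z)=J_0^{**}(z)$ for all $z\le\gamma$. Boundary layer energies (with $\mathbb N=\{0,1,2,\dots\}$): for $\theta>0$, $B_b(\theta):=\inf_{k\in\mathbb N}\min\{\frac12J_1(v^1-v^0)+\sum_{i=0}^{k-1}[J_2(\frac{v^{i+2}-v^i}{2})+\frac12J_1(v^{i+2}-v^{i+1})+\frac12J_1(v^{i+1}-v^i)-J_0(\gamma)]:v^{k+1}=0,\ v^{k+1}-v^k=\theta\}$; $B(\gamma):=\inf_{N\in\mathbb N}\min\{\frac12J_1(v^1-v^0)+\sum_{i\ge0}[J_2(\frac{v^{i+2}-v^i}{2})+\frac12J_1(v^{i+2}-v^{i+1})+\frac12J_1(v^{i+1}-v^i)-J_0(\gamma)]:v:\mathbb N\to\mathbb R,\ v^0=0,\ v^{i+1}-v^i=\gamma\ \forall i\ge N\}$; for $m\in\mathbb N$, $B_{IF}(m):=\inf_{k\in\mathbb N}\min\{\frac12J_1(v^1-v^0)+\sum_{i=0}^{k-1}[J_2(\frac{v^{i+2}-v^i}{2})+\frac12J_1(v^{i+2}-v^{i+1})+\frac12J_1(v^{i+1}-v^i)-J_0(\gamma)]+\frac{2m+1}{2}(J_{CB}(v^{k+1}-v^k)-J_0(\gamma)):v:\mathbb N\to\mathbb R,\ v^0=0\}$, and $B_{IF}(+\infty):=B(\gamma)$.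 *)

theory Defs
  imports "HOL-Analysis.Analysis"
begin

text \<open>Potentials are extended-real valued, never equal to minus infinity (values in (-inf,+inf]).
  The effective domain is the set where the value is finite.\<close>

definition edom :: "(real \<Rightarrow> ereal) \<Rightarrow> real set" where
  "edom f = {z. f z \<noteq> \<infinity>}"

definition J0 :: "(real \<Rightarrow> ereal) \<Rightarrow> (real \<Rightarrow> ereal) \<Rightarrow> real \<Rightarrow> ereal" where
  "J0 J1 J2 z = J2 z + ereal (1/2) * Inf {J1 z1 + J1 z2 | z1 z2. z1 + z2 = 2 * z}"

definition JCB :: "(real \<Rightarrow> ereal) \<Rightarrow> (real \<Rightarrow> ereal) \<Rightarrow> real \<Rightarrow> ereal" where
  "JCB J1 J2 z = J1 z + J2 z"

text \<open>Fenchel conjugate and biconjugate; the biconjugate is the convex lower semicontinuous envelope.\<close>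

definition fconj :: "(real \<Rightarrow> ereal) \<Rightarrow> real \<Rightarrow> ereal" where
  "fconj f p = (SUP z. ereal (p * z) - f z)"

definition fbiconj :: "(real \<Rightarrow> ereal) \<Rightarrow> real \<Rightarrow> ereal" where
  "fbiconj f z = (SUP p. ereal (p * z) - fconj f p)"

definition J0inf :: "(real \<Rightarrow> ereal) \<Rightarrow> (real \<Rightarrow> ereal) \<Rightarrow> ereal" where
  "J0inf J1 J2 = Lim at_top (J0 J1 J2)"

definition affine_near :: "(real \<Rightarrow> ereal) \<Rightarrow> real \<Rightarrow> bool" where
  "affine_near f z \<longleftrightarrow> (\<exists>e>0. \<exists>a b. \<forall>y. \<bar>y - z\<bar> < e \<longrightarrow> f y = ereal (a * y + b))"

definition C1alpha_on :: "real set \<Rightarrow> real \<Rightarrow> (real \<Rightarrow> ereal) \<Rightarrow> bool" where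
  "C1alpha_on S \<alpha> f \<longleftrightarrow> (\<exists>f'.
     (\<forall>z\<in>S. ((\<lambda>x. real_of_ereal (f x)) has_real_derivative f' z) (at z within S)) \<and>
     (\<forall>K. compact K \<and> K \<subseteq> S \<longrightarrow> (\<exists>L. \<forall>x\<in>K. \<forall>y\<in>K. \<bar>f' x - f' y\<bar> \<le> L * \<bar>x - y\<bar> powr \<alpha>)))"

definition C1_on :: "real set \<Rightarrow> (real \<Rightarrow> ereal) \<Rightarrow> bool" where
  "C1_on S f \<longleftrightarrow> (\<exists>f'.
     (\<forall>z\<in>S. ((\<lambda>x. real_of_ereal (f x)) has_real_derivative f' z) (at z within S)) \<and>
     continuous_on S f')"

definition econvex :: "(real \<Rightarrow> ereal) \<Rightarrow> bool" where
  "econvex f \<longleftrightarrow> (\<forall>x y t. 0 \<le> t \<and> t \<le> 1 \<longrightarrow>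
      f ((1 - t) * x + t * y) \<le> ereal (1 - t) * f x + ereal t * f y)"

definition estrict_convex_on :: "real set \<Rightarrow> (real \<Rightarrow> ereal) \<Rightarrow> bool" where
  "estrict_convex_on S f \<longleftrightarrow> (\<forall>x\<in>S. \<forall>y\<in>S. \<forall>t. x \<noteq> y \<and> 0 < t \<and> t < 1 \<longrightarrow>
      f ((1 - t) * x + t * y) < ereal (1 - t) * f x + ereal t * f y)"

definition LJ1 :: "(real \<Rightarrow> ereal) \<Rightarrow> (real \<Rightarrow> ereal) \<Rightarrow> bool" where
  "LJ1 J1 J2 \<longleftrightarrow>
     {z. J0 J1 J2 z = fbiconj (J0 J1 J2) z} \<inter> {z. affine_near (J0 J1 J2) z} = {}"

text \<open>LJ2 is read for z in the effective domain of J0.\<close>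

definition LJ2 :: "(real \<Rightarrow> ereal) \<Rightarrow> (real \<Rightarrow> ereal) \<Rightarrow> bool" where
  "LJ2 J1 J2 \<longleftrightarrow> (\<forall>z. J0 J1 J2 z = fbiconj (J0 J1 J2) z \<and> z \<in> edom (J0 J1 J2) \<longrightarrow>
     (\<exists>!p. fst p + snd p = 2 * z \<and>
            J0 J1 J2 z = J2 z + ereal (1/2) * (J1 (fst p) + J1 (snd p))))"

definition LJ3 :: "(real \<Rightarrow> ereal) \<Rightarrow> (real \<Rightarrow> ereal) \<Rightarrow> bool" where
  "LJ3 J1 J2 \<longleftrightarrow>
     (\<exists>\<alpha>. 0 < \<alpha> \<and> \<alpha> \<le> 1 \<and> C1alpha_on (edom J1) \<alpha> J1 \<and> C1alpha_on (edom J2) \<alpha> J2) \<and>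
     C1_on (edom (J0 J1 J2)) (J0 J1 J2) \<and>
     edom J1 = edom J2 \<and> {0<..} \<subseteq> edom J1 \<and>
     (J1 \<longlongrightarrow> 0) at_top \<and> (J2 \<longlongrightarrow> 0) at_top \<and>
     (\<exists>r::real. (J0 J1 J2 \<longlongrightarrow> ereal r) at_top)"

definition LJ4 :: "(real \<Rightarrow> ereal) \<Rightarrow> (real \<Rightarrow> ereal) \<Rightarrow> real \<Rightarrow> real \<Rightarrow> real \<Rightarrow> bool" where
  "LJ4 J1 J2 \<delta>1 \<delta>2 \<gamma> \<longleftrightarrow>
     (\<exists>\<Psi> :: real \<Rightarrow> ereal. econvex \<Psi> \<and> (\<forall>z. 0 \<le> \<Psi> z) \<and>
        ((\<lambda>z. \<Psi> z / ereal \<bar>z\<bar>) \<longlongrightarrow> \<infinity>) at_bot \<and>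
        (\<exists>c1 c2. c1 > 0 \<and> c2 > 0 \<and>
           (\<forall>z. \<forall>J \<in> {J1, J2}. ereal c1 * (\<Psi> z - 1) \<le> J z \<and>
                                J z \<le> ereal c2 * max (\<Psi> z) (ereal \<bar>z\<bar>)))) \<and>
     \<delta>1 > 0 \<and> \<delta>2 > 0 \<and> \<gamma> > 0 \<and>
     {z. \<forall>y. J1 z \<le> J1 y} = {\<delta>1} \<and>
     {z. \<forall>y. J2 z \<le> J2 y} = {\<delta>2} \<and>
     {z. \<forall>y. J0 J1 J2 z \<le> J0 J1 J2 y} = {\<gamma>} \<and>
     estrict_convex_on ({..<\<delta>1} \<inter> edom J1) J1 \<and>
     estrict_convex_on ({..<\<delta>2} \<inter> edom J2) J2 \<and>
     J0 J1 J2 \<gamma> < J0inf J1 J2 \<and>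
     (\<forall>z\<le>\<gamma>. J0 J1 J2 z = fbiconj (J0 J1 J2) z)"

definition cell :: "(real \<Rightarrow> ereal) \<Rightarrow> (real \<Rightarrow> ereal) \<Rightarrow> real \<Rightarrow> (nat \<Rightarrow> real) \<Rightarrow> nat \<Rightarrow> ereal" where
  "cell J1 J2 \<gamma> v i = J2 ((v (i+2) - v i) / 2) + ereal (1/2) * J1 (v (i+2) - v (i+1))
      + ereal (1/2) * J1 (v (i+1) - v i) - J0 J1 J2 \<gamma>"

definition Bb :: "(real \<Rightarrow> ereal) \<Rightarrow> (real \<Rightarrow> ereal) \<Rightarrow> real \<Rightarrow> real \<Rightarrow> ereal" where
  "Bb J1 J2 \<gamma> \<theta> = Inf {ereal (1/2) * J1 (v 1 - v 0) + (\<Sum>i<k. cell J1 J2 \<gamma> v i) | k v.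
      v (k+1) = 0 \<and> v (k+1) - v k = \<theta>}"

definition Bgamma :: "(real \<Rightarrow> ereal) \<Rightarrow> (real \<Rightarrow> ereal) \<Rightarrow> real \<Rightarrow> ereal" where
  "Bgamma J1 J2 \<gamma> = Inf {ereal (1/2) * J1 (v 1 - v 0) + (\<Sum>i. cell J1 J2 \<gamma> v i) | N v.
      v 0 = 0 \<and> (\<forall>i\<ge>N. v (i+1) - v i = \<gamma>)}"

definition BIF :: "(real \<Rightarrow> ereal) \<Rightarrow> (real \<Rightarrow> ereal) \<Rightarrow> real \<Rightarrow> enat \<Rightarrow> ereal" where
  "BIF J1 J2 \<gamma> m = (case m of
      enat n \<Rightarrow> Inf {ereal (1/2) * J1 (v 1 - v 0) + (\<Sum>i<k. cell J1 J2 \<gamma> v i)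
                 + ereal (real (2*n+1) / 2) * (JCB J1 J2 (v (k+1) - v k) - J0 J1 J2 \<gamma>) | k v.
                 v 0 = 0}
    | \<infinity> \<Rightarrow> Bgamma J1 J2 \<gamma>)"

end

theory Submission
  imports Defs
begin

lemma half_distrib: "ereal (1/2) * ((x::ereal) + y) = ereal(1/2)*x + ereal(1/2)*y"
  by (cases x; cases y; simp)

lemma J0_le:
  fixes J1 J2 :: "real \<Rightarrow> ereal"
  assumes "a + b = 2 * z"
  shows "J0 J1 J2 z \<le> J2 z + ereal (1/2) * J1 a + ereal (1/2) * J1 b"
proof -
  have "Inf {J1 z1 + J1 z2 | z1 z2. z1 + z2 = 2 * z} \<le> J1 a + J1 b"
    by (rule Inf_lower) (use assms in blast)
  hence "ereal (1/2) * Inf {J1 z1 + J1 z2 | z1 z2. z1 + z2 = 2 * z} \<le> ereal (1/2) * (J1 a + J1 b)"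
    by (rule ereal_mult_left_mono) simp
  thus ?thesis unfolding J0_def half_distrib by (simp add: add.assoc add_left_mono)
qed

lemma sub_nonneg: "ereal r \<le> (X::ereal) \<Longrightarrow> 0 \<le> X - ereal r"
  by (cases X) auto

lemma cell_nonneg:
  assumes "\<forall>y. J0 J1 J2 \<gamma> \<le> J0 J1 J2 y" "J0 J1 J2 \<gamma> = ereal r"
  shows "0 \<le> cell J1 J2 \<gamma> v i"
proof -
  have "J0 J1 J2 ((v (i+2) - v i) / 2) \<le> J2 ((v (i+2) - v i) / 2) + ereal (1/2) * J1 (v (i+2) - v (i+1))
      + ereal (1/2) * J1 (v (i+1) - v i)"
    by (rule J0_le) simp
  hence "ereal r \<le> J2 ((v (i+2) - v i) / 2) + ereal (1/2) * J1 (v (i+2) - v (i+1))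
      + ereal (1/2) * J1 (v (i+1) - v i)"
    using assms by (metis order_trans)
  thus ?thesis unfolding cell_def assms(2) by (rule sub_nonneg)
qed

lemma JCB_ge:
  assumes "\<forall>y. J0 J1 J2 \<gamma> \<le> J0 J1 J2 y" "J0 J1 J2 \<gamma> = ereal r" "\<forall>z. J1 z \<noteq> -\<infinity>"
  shows "0 \<le> JCB J1 J2 w - J0 J1 J2 \<gamma>"
proof -
  have "J0 J1 J2 w \<le> J2 w + ereal (1/2) * J1 w + ereal (1/2) * J1 w"
    by (rule J0_le) simp
  also have "\<dots> = J2 w + ereal (1/2) * (J1 w + J1 w)" by (simp add: half_distrib add.assoc)
  also have "ereal (1/2) * (J1 w + J1 w) = J1 w" using assms(3) by (cases "J1 w") auto
  finally have "ereal r \<le> JCB J1 J2 w" using assms unfolding JCB_def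
    by (metis add.commute order_trans)
  thus ?thesis unfolding assms(2) by (rule sub_nonneg)
qed

theorem lemma5p2:
  fixes J1 J2 :: "real \<Rightarrow> ereal" and \<delta>1 \<delta>2 \<gamma> :: real
  assumes "\<forall>z. J1 z \<noteq> -\<infinity>" and "\<forall>z. J2 z \<noteq> -\<infinity>"
    and "LJ1 J1 J2" and "LJ2 J1 J2" and "LJ3 J1 J2" and "LJ4 J1 J2 \<delta>1 \<delta>2 \<gamma>"
  shows "(\<forall>m::enat. ereal (1/2) * J1 \<delta>1 \<le> BIF J1 J2 \<gamma> m \<and> BIF J1 J2 \<gamma> m \<le> ereal (1/2) * J1 \<gamma>)
       \<and> (\<forall>\<theta>>0. Bb J1 J2 \<gamma> \<theta> \<le> ereal (1/2) * J1 \<theta>)"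
proof -
  note L4 = assms(6)[unfolded LJ4_def]
  have mind: "\<forall>y. J1 \<delta>1 \<le> J1 y"
  proof -
    have "\<delta>1 \<in> {z. \<forall>y. J1 z \<le> J1 y}" using L4 by simp
    thus ?thesis by simp
  qed
  have ming: "\<forall>y. J0 J1 J2 \<gamma> \<le> J0 J1 J2 y"
  proof -
    have "\<gamma> \<in> {z. \<forall>y. J0 J1 J2 z \<le> J0 J1 J2 y}" using L4 by simp
    thus ?thesis by simp
  qed
  have bic: "J0 J1 J2 \<gamma> = fbiconj (J0 J1 J2) \<gamma>" using L4 by blast
  have lt: "J0 J1 J2 \<gamma> < J0inf J1 J2" using L4 by blast
  hence ninf: "J0 J1 J2 \<gamma> \<noteq> \<infinity>" by auto
  hence dom: "\<gamma> \<in> edom (J0 J1 J2)" unfolding edom_def by simp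
  obtain p where p: "fst p + snd p = 2 * \<gamma>"
      "J0 J1 J2 \<gamma> = J2 \<gamma> + ereal (1/2) * (J1 (fst p) + J1 (snd p))"
    and uq: "\<And>q. fst q + snd q = 2 * \<gamma> \<and>
            J0 J1 J2 \<gamma> = J2 \<gamma> + ereal (1/2) * (J1 (fst q) + J1 (snd q)) \<Longrightarrow> q = p"
    using assms(4)[unfolded LJ2_def, rule_format, OF conjI[OF bic dom]] by blast
  have "(snd p, fst p) = p" by (rule uq) (use p in \<open>auto simp: add.commute\<close>)
  hence "fst p = snd p" by (metis fst_conv snd_conv prod.collapse)
  hence "fst p = \<gamma>" "snd p = \<gamma>" using p(1) by auto
  hence "J0 J1 J2 \<gamma> = J2 \<gamma> + ereal (1/2) * (J1 \<gamma> + J1 \<gamma>)" using p(2) by simp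
  also have "ereal (1/2) * (J1 \<gamma> + J1 \<gamma>) = J1 \<gamma>" using assms(1) by (cases "J1 \<gamma>") auto
  finally have J0g: "J0 J1 J2 \<gamma> = J2 \<gamma> + J1 \<gamma>" .
  then obtain r where r: "J0 J1 J2 \<gamma> = ereal r"
    using ninf J0g assms(1,2) by (cases "J0 J1 J2 \<gamma>") (auto, metis plus_ereal.simps(3) plus_ereal.simps(6) uminus_ereal.simps(2))
  have cell0: "\<And>v i. 0 \<le> cell J1 J2 \<gamma> v i" using cell_nonneg[OF ming r] .
  have jcb0: "\<And>w. 0 \<le> JCB J1 J2 w - J0 J1 J2 \<gamma>" using JCB_ge[OF ming r assms(1)] .
  have halfd: "\<And>y. ereal (1/2) * J1 \<delta>1 \<le> ereal (1/2) * J1 y"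
    using mind by (intro ereal_mult_left_mono) auto
  have cellg: "\<And>v i. (\<forall>j. v (j+1) - v j = \<gamma>) \<Longrightarrow> cell J1 J2 \<gamma> v i = 0"
  proof -
    fix v :: "nat \<Rightarrow> real" and i assume h: "\<forall>j. v (j+1) - v j = \<gamma>"
    have a: "v (i+2) - v (i+1) = \<gamma>" using h[rule_format, of "i+1"] by simp
    have b: "v (i+1) - v i = \<gamma>" using h by simp
    have c: "(v (i+2) - v i) / 2 = \<gamma>" using a b by simp
    have "cell J1 J2 \<gamma> v i = J2 \<gamma> + ereal (1/2) * (J1 \<gamma> + J1 \<gamma>) - J0 J1 J2 \<gamma>"
      unfolding cell_def a b c half_distrib by (simp add: add.assoc)
    also have "ereal (1/2) * (J1 \<gamma> + J1 \<gamma>) = J1 \<gamma>" using assms(1) by (cases "J1 \<gamma>") auto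
    finally show "cell J1 J2 \<gamma> v i = 0" by (simp add: J0g[symmetric] r)
  qed
  have part1: "ereal (1/2) * J1 \<delta>1 \<le> BIF J1 J2 \<gamma> m \<and> BIF J1 J2 \<gamma> m \<le> ereal (1/2) * J1 \<gamma>" for m
  proof (cases m)
    case (enat n)
    have lo: "ereal (1/2) * J1 \<delta>1 \<le> BIF J1 J2 \<gamma> m"
      unfolding enat BIF_def
    proof (simp only: enat.case, rule Inf_greatest)
      fix x assume "x \<in> {ereal (1/2) * J1 (v 1 - v 0) + (\<Sum>i<k. cell J1 J2 \<gamma> v i)
                 + ereal (real (2*n+1) / 2) * (JCB J1 J2 (v (k+1) - v k) - J0 J1 J2 \<gamma>) | k v.
                 v 0 = 0}"
      then obtain k and v :: "nat \<Rightarrow> real" where x: "x = ereal (1/2) * J1 (v 1 - v 0) + (\<Sum>i<k. cell J1 J2 \<gamma> v i)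
                 + ereal (real (2*n+1) / 2) * (JCB J1 J2 (v (k+1) - v k) - J0 J1 J2 \<gamma>)" by blast
      have "0 \<le> (\<Sum>i<k. cell J1 J2 \<gamma> v i)" by (rule sum_nonneg) (use cell0 in auto)
      moreover have "0 \<le> ereal (real (2*n+1) / 2) * (JCB J1 J2 (v (k+1) - v k) - J0 J1 J2 \<gamma>)"
        by (rule ereal_0_le_mult) (use jcb0 in auto)
      ultimately show "ereal (1/2) * J1 \<delta>1 \<le> x" unfolding x
        using halfd[of "v 1 - v 0"] by (metis add_increasing2 add.commute add_mono)
    qed
    have hi: "BIF J1 J2 \<gamma> m \<le> ereal (1/2) * J1 \<gamma>"
      unfolding enat BIF_def
    proof (simp only: enat.case, rule Inf_lower2)
      let ?v = "\<lambda>i::nat. \<gamma> * real i"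
      show "ereal (1/2) * J1 (?v 1 - ?v 0) + (\<Sum>i<0. cell J1 J2 \<gamma> ?v i)
            + ereal (real (2*n+1) / 2) * (JCB J1 J2 (?v (0+1) - ?v 0) - J0 J1 J2 \<gamma>)
          \<in> {ereal (1/2) * J1 (v 1 - v 0) + (\<Sum>i<k. cell J1 J2 \<gamma> v i)
                 + ereal (real (2*n+1) / 2) * (JCB J1 J2 (v (k+1) - v k) - J0 J1 J2 \<gamma>) | k v.
                 v 0 = 0}" by (intro CollectI exI[of _ 0] exI[of _ ?v]) simp
      have "JCB J1 J2 \<gamma> - J0 J1 J2 \<gamma> = 0" 
      proof -
        have "JCB J1 J2 \<gamma> = ereal r" using J0g r by (metis JCB_def add.commute)
        thus ?thesis using r by simp
      qed
      thus "ereal (1/2) * J1 (?v 1 - ?v 0) + (\<Sum>i<0. cell J1 J2 \<gamma> ?v i)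
            + ereal (real (2*n+1) / 2) * (JCB J1 J2 (?v (0+1) - ?v 0) - J0 J1 J2 \<gamma>)
          \<le> ereal (1 / 2) * J1 \<gamma>" by simp
    qed
    show ?thesis using lo hi by simp
  next
    case infinity
    have lo: "ereal (1/2) * J1 \<delta>1 \<le> BIF J1 J2 \<gamma> m"
      unfolding infinity BIF_def Bgamma_def
    proof (simp only: enat.case, rule Inf_greatest)
      fix x assume "x \<in> {ereal (1/2) * J1 (v 1 - v 0) + (\<Sum>i. cell J1 J2 \<gamma> v i) | N v.
      v 0 = 0 \<and> (\<forall>i\<ge>N. v (i+1) - v i = \<gamma>)}"
      then obtain v :: "nat \<Rightarrow> real" where x: "x = ereal (1/2) * J1 (v 1 - v 0) + (\<Sum>i. cell J1 J2 \<gamma> v i)" by blast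
      have "0 \<le> (\<Sum>i. cell J1 J2 \<gamma> v i)" using cell0 by (simp add: suminf_nonneg summable_ereal_pos)
      thus "ereal (1/2) * J1 \<delta>1 \<le> x" unfolding x
        using halfd[of "v 1 - v 0"] by (metis add_increasing2 add.commute)
    qed
    have hi: "BIF J1 J2 \<gamma> m \<le> ereal (1/2) * J1 \<gamma>"
      unfolding infinity BIF_def Bgamma_def
    proof (simp only: enat.case, rule Inf_lower2)
      let ?v = "\<lambda>i::nat. \<gamma> * real i"
      show "ereal (1/2) * J1 (?v 1 - ?v 0) + (\<Sum>i. cell J1 J2 \<gamma> ?v i)
          \<in> {ereal (1/2) * J1 (v 1 - v 0) + (\<Sum>i. cell J1 J2 \<gamma> v i) | N v.
      v 0 = 0 \<and> (\<forall>i\<ge>N. v (i+1) - v i = \<gamma>)}"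
        by (intro CollectI exI[of _ 0] exI[of _ ?v]) (simp add: algebra_simps)
      have "\<And>i. cell J1 J2 \<gamma> ?v i = 0" by (rule cellg) (simp add: algebra_simps)
      thus "ereal (1/2) * J1 (?v 1 - ?v 0) + (\<Sum>i. cell J1 J2 \<gamma> ?v i) \<le> ereal (1 / 2) * J1 \<gamma>"
        by simp
    qed
    show ?thesis using lo hi by simp
  qed
  have part2: "Bb J1 J2 \<gamma> \<theta> \<le> ereal (1/2) * J1 \<theta>" for \<theta>
    unfolding Bb_def
  proof (rule Inf_lower2)
    let ?v = "\<lambda>i::nat. if i = 0 then - \<theta> else 0"
    show "ereal (1/2) * J1 (?v 1 - ?v 0) + (\<Sum>i<0. cell J1 J2 \<gamma> ?v i)
      \<in> {ereal (1/2) * J1 (v 1 - v 0) + (\<Sum>i<k. cell J1 J2 \<gamma> v i) | k v.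
      v (k+1) = 0 \<and> v (k+1) - v k = \<theta>}"
      by (intro CollectI exI[of _ 0] exI[of _ ?v]) simp
    show "ereal (1/2) * J1 (?v 1 - ?v 0) + (\<Sum>i<0. cell J1 J2 \<gamma> ?v i) \<le> ereal (1/2) * J1 \<theta>"
      by simp
  qed
  show ?thesis using part1 part2 by blast
qed

end
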